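(* The polynomials $a_0,\Delta,\beta,\gamma_0$ satisfy $$\beta^2=a_0^q\gamma_0+\Delta\left(\Delta^{\frac{q-1}{2}}-a_0^{q-1}\right)^2.$$
   Context: Let $p>2$ be a prime, $q=p^n$, and $\mathbb{F}$ a field of characteristic $p$ containing $\mathbb{F}_q$. In $\mathbb{F}[a_0,a_1,a_2]$ define $\Delta=a_1^2-a_0a_2$, $\beta=\prod_{c\in\mathbb{F}_q}(a_1+ca_0)=a_1^q-a_0^{q-1}a_1$, and $\gamma_0=\prod_{c\in\mathbb{F}_q}(a_2+2ca_1+c^2a_0)$. *)

theory Defs
  imports "HOL-Computational_Algebra.Polynomial"
begin

text \<open>The trivariate polynomial ring F[a0,a1,a2] is modelled as the iterated
univariate ring ((F[a0])[a1])[a2], i.e. the type 'a poly poly poly.\<close>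

definition cst3 :: "'a::comm_ring_1 \<Rightarrow> 'a poly poly poly" where
  "cst3 c = [:[:[:c:]:]:]"

definition var_a0 :: "'a::comm_ring_1 poly poly poly" where
  "var_a0 = [:[:[:0, 1:]:]:]"

definition var_a1 :: "'a::comm_ring_1 poly poly poly" where
  "var_a1 = [:[:0, 1:]:]"

definition var_a2 :: "'a::comm_ring_1 poly poly poly" where
  "var_a2 = [:0, 1:]"

text \<open>The copy of F_q inside F: the roots of X^q - X.\<close>
definition Fq :: "nat \<Rightarrow> 'a::field set" where
  "Fq q = {c. c ^ q = c}"

definition Delta :: "'a::comm_ring_1 poly poly poly" where
  "Delta = var_a1 ^ 2 - var_a0 * var_a2"

definition beta :: "nat \<Rightarrow> 'a::field poly poly poly" where
  "beta q = (\<Prod>c\<in>Fq q. var_a1 + cst3 c * var_a0)"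

definition gamma0 :: "nat \<Rightarrow> 'a::field poly poly poly" where
  "gamma0 q = (\<Prod>c\<in>Fq q. var_a2 + cst3 (2 * c) * var_a1 + cst3 (c ^ 2) * var_a0)"

end

theory Submission
  imports Defs "HOL-Computational_Algebra.Primes"
begin

lemma roots_prod_dvd:
  fixes p :: "'b::idom poly"
  assumes "finite A" "\<forall>a\<in>A. poly p a = 0"
  shows "(\<Prod>a\<in>A. [:-a,1:]) dvd p"
  using assms
proof (induction A arbitrary: p rule: finite_induct)
  case empty then show ?case by simp
next
  case (insert a A)
  have "[:-a,1:] dvd p" using insert.prems poly_eq_0_iff_dvd by blast
  then obtain r where r: "p = [:-a,1:] * r" by (elim dvdE)
  have "\<forall>b\<in>A. poly r b = 0"
  proof
    fix b assume "b \<in> A"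
    then have "b \<noteq> a" "poly p b = 0" using insert by auto
    then show "poly r b = 0" using r by simp
  qed
  then have "(\<Prod>a\<in>A. [:-a,1:]) dvd r" using insert.IH by blast
  then show ?case unfolding prod.insert[OF insert(1,2)] r by (rule mult_dvd_mono[OF dvd_refl])
qed

lemma monic_roots_eq:
  fixes p :: "'b::idom poly"
  assumes "finite A" "\<forall>a\<in>A. poly p a = 0" "lead_coeff p = 1" "degree p = card A"
  shows "p = (\<Prod>a\<in>A. [:-a,1:])"
proof -
  let ?D = "(\<Prod>a\<in>A. [:-a,1:])"
  obtain k where k: "p = ?D * k" using roots_prod_dvd[OF assms(1,2)] by (elim dvdE)
  have p0: "p \<noteq> 0" using assms(3) by auto
  have D0: "?D \<noteq> 0" by (simp add: assms(1))
  have k0: "k \<noteq> 0" using p0 k by auto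
  have dD: "degree ?D = card A"
    by (subst degree_prod_eq_sum_degree) auto
  have "degree p = degree ?D + degree k" using k D0 k0 by (simp add: degree_mult_eq)
  then have dk: "degree k = 0" using dD assms(4) by simp
  have "lead_coeff ?D = 1" by (simp add: lead_coeff_prod)
  then have "lead_coeff k = 1" using k assms(3) by (simp add: lead_coeff_mult)
  then have "k = 1" using dk by (metis degree_0_id one_pCons)
  then show ?thesis using k by simp
qed

lemma cst3_mult: "cst3 (a * b) = cst3 a * (cst3 b :: 'a::comm_ring_1 poly poly poly)"
  by (simp add: cst3_def)
lemma cst3_add: "cst3 (a + b) = cst3 a + (cst3 b :: 'a::comm_ring_1 poly poly poly)"
  by (simp add: cst3_def)
lemma cst3_power: "cst3 (a ^ k) = (cst3 a :: 'a::comm_ring_1 poly poly poly) ^ k"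
  by (induction k) (simp_all add: cst3_mult, simp add: cst3_def flip: one_pCons)
lemma cst3_inj: "cst3 a = (cst3 b :: 'a::comm_ring_1 poly poly poly) \<longleftrightarrow> a = b"
  by (simp add: cst3_def)
lemma cst3_2: "cst3 (2 * a) = 2 * (cst3 a :: 'a::comm_ring_1 poly poly poly)"
  by (metis cst3_add mult_2)

lemma monic_X_q:
  fixes k :: "'b::idom"
  assumes "q \<ge> 2"
  shows "degree (monom 1 q - monom k 1 :: 'b poly) = q \<and> lead_coeff (monom 1 q - monom k 1 :: 'b poly) = 1"
proof -
  let ?p = "monom 1 q - monom k 1 :: 'b poly"
  have c: "coeff ?p q = 1" using assms by (simp add: coeff_monom)
  have "\<forall>i>q. coeff ?p i = 0" using assms by (simp add: coeff_monom)
  then have "degree ?p \<le> q" by (rule degree_le)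
  moreover have "q \<le> degree ?p" by (rule le_degree) (use c in simp)
  ultimately have "degree ?p = q" by simp
  then show ?thesis using c by simp
qed

lemma K_lemma:
  fixes z :: "'a::field poly poly poly"
  assumes z: "z \<noteq> 0" and q: "q \<ge> 2" "odd q" and card: "card (Fq q :: 'a set) = q"
  shows "(\<Prod>c\<in>Fq q. [:cst3 c * z, 1:]) = monom 1 q - monom (z ^ (q - 1)) 1"
proof -
  define S where "S = (Fq q :: 'a set)"
  have fin: "finite S" using card q unfolding S_def by (metis card.infinite not_numeral_le_zero)
  define A where "A = (\<lambda>c. -(cst3 c * z)) ` S"
  have inj: "inj_on (\<lambda>c. -(cst3 c * z)) S"
    by (rule inj_onI) (use z in \<open>simp add: cst3_inj\<close>)
  have cardA: "card A = q" unfolding A_def using card_image[OF inj] card S_def by simp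
  have finA: "finite A" unfolding A_def using fin by simp
  let ?p = "monom 1 q - monom (z ^ (q - 1)) 1 :: 'a poly poly poly poly"
  have roots: "\<forall>a\<in>A. poly ?p a = 0"
  proof
    fix a assume "a \<in> A"
    then obtain c where c: "c \<in> S" "a = -(cst3 c * z)" unfolding A_def by auto
    have cq: "c ^ q = c" using c(1) unfolding S_def Fq_def by simp
    have "poly ?p a = (-(cst3 c * z)) ^ q + z ^ (q - 1) * (cst3 c * z)"
      by (simp add: poly_monom c(2))
    also have "\<dots> = - (cst3 (c ^ q) * z ^ q) + cst3 c * (z ^ (q - 1) * z)"
      using q by (simp add: power_minus_odd cst3_power power_mult_distrib algebra_simps)
    also have "z ^ (q - 1) * z = z ^ q" using q by (metis power_minus_mult not_numeral_le_zero le_0_eq neq0_conv)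
    finally show "poly ?p a = 0" using cq by simp
  qed
  have "?p = (\<Prod>a\<in>A. [:-a,1:])"
  proof (rule monic_roots_eq[OF finA roots])
    have m: "degree ?p = q" "lead_coeff ?p = 1" using monic_X_q[OF q(1), of "z^(q-1)"] by auto
    show "lead_coeff ?p = 1" by (rule m(2))
    show "degree ?p = card A" using m(1) cardA by simp
  qed
  also have "\<dots> = (\<Prod>c\<in>S. [:cst3 c * z, 1:])"
    unfolding A_def by (subst prod.reindex[OF inj]) simp
  finally show ?thesis unfolding S_def by simp
qed

lemma pcompose_monom': "pcompose (monom a n) r = [:a:] * r ^ n"
  for r :: "'b::comm_ring_1 poly"
  by (induction n) (simp_all add: monom_Suc pcompose_pCons monom_0 algebra_simps)

lemma pcompose_power': "pcompose (p ^ n) r = (pcompose p r) ^ n"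
  for r :: "'b::comm_ring_1 poly"
  by (induction n) (simp_all add: pcompose_mult pcompose_1)

lemma const_power': "[:x:] ^ n = [:x ^ n:]"
  for x :: "'b::comm_ring_1"
  by (induction n) (simp_all flip: one_pCons)

theorem lemma2p2:
  fixes p n q :: nat
  assumes "prime p" and "p > 2" and "n \<ge> 1" and "q = p ^ n"
    and "CHAR('a::field) = p"
    and "card (Fq q :: 'a set) = q"
  shows "(beta q :: 'a poly poly poly) ^ 2
           = var_a0 ^ q * gamma0 q
             + Delta * (Delta ^ ((q - 1) div 2) - var_a0 ^ (q - 1)) ^ 2"
proof -
  have oddp: "odd p" using assms(1,2) by (simp add: prime_odd_nat)
  have oddq: "odd q" using oddp assms(4) by simp
  have "p \<le> q" using assms(2,3,4) by (metis One_nat_def less_trans one_less_numeral_iff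
      power_increasing_iff power_one_right semiring_norm(76) zero_less_Suc not_le)
  then have q2: "q \<ge> 2" using assms(2) by simp
  define m where "m = (q - 1) div 2"
  have qm: "q = 2 * m + 1" using oddq m_def by presburger
  define a0 :: "'a poly poly poly" where "a0 = var_a0"
  define a1 :: "'a poly poly poly" where "a1 = var_a1"
  define a2 :: "'a poly poly poly" where "a2 = var_a2"
  have a0nz: "a0 \<noteq> 0" by (simp add: a0_def var_a0_def)
  define A where "A = a0 ^ (q - 1)"
  define B where "B = a1 ^ q - A * a1"
  define u where "u c = a1 + cst3 c * a0" for c :: 'a
  define S where "S = (Fq q :: 'a set)"
  have Kp: "(\<Prod>c\<in>S. [:cst3 c * a0, 1:]) = monom 1 q - monom A 1"
    unfolding S_def A_def by (rule K_lemma[OF a0nz q2 oddq assms(6)])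
  have Km: "(\<Prod>c\<in>S. [:cst3 c * (-a0), 1:]) = monom 1 q - monom A 1"
  proof -
    have "(-a0) ^ (q - 1) = A" unfolding A_def using oddq by (simp add: power_minus_even)
    then show ?thesis unfolding S_def using K_lemma[of "-a0" q] a0nz q2 oddq assms(6) by simp
  qed
  have beta: "beta q = B"
  proof -
    have "poly (\<Prod>c\<in>S. [:cst3 c * a0, 1:]) a1 = poly (monom 1 q - monom A 1) a1"
      by (simp only: Kp)
    then show ?thesis unfolding beta_def B_def S_def a0_def a1_def
      by (simp add: poly_prod poly_monom add.commute)
  qed
  define X :: "'a poly poly poly poly" where "X = [:0,1:]"
  have gp: "(\<Prod>c\<in>S. [:u c, 1:]) = (X + [:a1:]) ^ q - [:A:] * (X + [:a1:])"
  proof -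
    have "pcompose (\<Prod>c\<in>S. [:cst3 c * a0, 1:]) [:a1, 1:] = pcompose (monom 1 q - monom A 1) [:a1, 1:]"
      by (simp only: Kp)
    moreover have "X + [:a1:] = [:a1, 1:]" unfolding X_def by simp
    ultimately show ?thesis
      by (simp add: pcompose_prod pcompose_diff pcompose_monom' pcompose_pCons u_def add.commute)
  qed
  have gm: "(\<Prod>c\<in>S. [:- u c, 1:]) = (X - [:a1:]) ^ q - [:A:] * (X - [:a1:])"
  proof -
    have "pcompose (\<Prod>c\<in>S. [:cst3 c * (-a0), 1:]) [:-a1, 1:] = pcompose (monom 1 q - monom A 1) [:-a1, 1:]"
      by (simp only: Km)
    moreover have "X - [:a1:] = [:-a1, 1:]" unfolding X_def by simp
    ultimately show ?thesis
      by (simp add: pcompose_prod pcompose_diff pcompose_monom' pcompose_pCons u_def add.commute)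
  qed
  have charR: "CHAR('a poly poly poly poly) = p" using assms(5) by simp
  have frob: "(x + y) ^ q = x ^ q + y ^ q" for x y :: "'a poly poly poly poly"
    by (rule freshmans_dream') (use charR assms(1,4) in auto)
  have fp: "(X + [:a1:]) ^ q = X ^ q + [:a1 ^ q:]" by (simp add: frob const_power')
  have fm: "(X - [:a1:]) ^ q = X ^ q - [:a1 ^ q:]"
  proof -
    have e: "[:-a1:] = -[:a1:]" by simp
    have "(X - [:a1:]) ^ q = (X + [:-a1:]) ^ q" by (simp only: e diff_conv_add_uminus)
    also have "\<dots> = X ^ q + [:-a1:] ^ q" by (rule frob)
    also have "[:-a1:] ^ q = [:(-a1) ^ q:]" by (rule const_power')
    also have "(-a1) ^ q = -(a1 ^ q)" using oddq by (rule power_minus_odd)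
    finally show ?thesis by simp
  qed
  have prodg: "(\<Prod>c\<in>S. [:- (u c ^ 2), 0, 1:]) = (X ^ q - [:A:] * X) ^ 2 - [:B ^ 2:]"
  proof -
    have "(\<Prod>c\<in>S. [:- (u c ^ 2), 0, 1:]) = (\<Prod>c\<in>S. [:u c, 1:] * [:- u c, 1:])"
      by (rule prod.cong) (simp_all add: power2_eq_square)
    also have "\<dots> = (\<Prod>c\<in>S. [:u c, 1:]) * (\<Prod>c\<in>S. [:- u c, 1:])"
      by (rule prod.distrib)
    also have "\<dots> = (X ^ q + [:a1 ^ q:] - [:A:] * (X + [:a1:])) * (X ^ q - [:a1 ^ q:] - [:A:] * (X - [:a1:]))"
      by (simp only: gp gm fp fm)
    also have "\<dots> = (X ^ q - [:A:] * X) ^ 2 - ([:a1 ^ q:] - [:A:] * [:a1:]) ^ 2"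
      by (simp add: algebra_simps power2_eq_square)
    also have "[:a1 ^ q:] - [:A:] * [:a1:] = [:B:]" unfolding B_def by simp
    finally show ?thesis by (simp add: const_power')
  qed
  define P where "P = (\<Prod>c\<in>S. [:- (u c ^ 2), 1:])"
  define Q where "Q = X * (X ^ m - [:A:]) ^ 2 - [:B ^ 2:]"
  define X2 :: "'a poly poly poly poly" where "X2 = [:0, 0, 1:]"
  have X2X: "X2 = X ^ 2" unfolding X2_def X_def by (simp add: power2_eq_square)
  have "pcompose P X2 = (\<Prod>c\<in>S. [:- (u c ^ 2), 0, 1:])"
    unfolding P_def X2_def by (simp add: pcompose_prod pcompose_pCons)
  also have "\<dots> = (X ^ q - [:A:] * X) ^ 2 - [:B ^ 2:]" by (rule prodg)
  also have "X ^ q - [:A:] * X = X * ((X ^ 2) ^ m - [:A:])"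
  proof -
    have "X ^ q = X * (X ^ 2) ^ m" unfolding qm power_mult[symmetric] by simp
    then show ?thesis by (simp add: right_diff_distrib mult.commute)
  qed
  also have "(X * ((X ^ 2) ^ m - [:A:])) ^ 2 - [:B ^ 2:] = pcompose Q X2"
  proof -
    have pX: "pcompose X r = r" for r unfolding X_def by (simp add: pcompose_pCons)
    have "pcompose Q X2 = X2 * (X2 ^ m - [:A:]) ^ 2 - [:B ^ 2:]"
      unfolding Q_def by (simp only: pcompose_diff pcompose_mult pcompose_power' pX pcompose_const)
    then show ?thesis unfolding X2X by (simp add: power_mult_distrib)
  qed
  finally have "pcompose (P - Q) X2 = 0" by (simp add: pcompose_diff)
  then have "P - Q = 0" by (rule pcompose_eq_0) (simp add: X2_def)
  then have PQ: "poly P Delta = poly Q Delta" by simp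
  have "poly P Delta = (\<Prod>c\<in>S. -(a0 * (a2 + cst3 (2 * c) * a1 + cst3 (c ^ 2) * a0)))"
    unfolding P_def poly_prod
  proof (rule prod.cong)
    fix c assume "c \<in> S"
    show "poly [:- (u c ^ 2), 1:] Delta = -(a0 * (a2 + cst3 (2 * c) * a1 + cst3 (c ^ 2) * a0))"
      unfolding cst3_2 cst3_power
      by (simp add: u_def Delta_def a0_def a1_def a2_def algebra_simps power2_eq_square)
  qed simp
  also have "\<dots> = (\<Prod>c\<in>S. -a0) * gamma0 q"
    unfolding gamma0_def S_def a0_def a1_def a2_def
    by (subst prod.distrib[symmetric]) (rule prod.cong, simp_all)
  also have "(\<Prod>c\<in>S. -a0) = - (a0 ^ q)"
    using assms(6) oddq unfolding S_def by (simp add: power_minus_odd)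
  finally have "- (a0 ^ q) * gamma0 q = Delta * (Delta ^ m - A) ^ 2 - B ^ 2"
    using PQ unfolding Q_def X_def by simp
  then show ?thesis unfolding beta m_def[symmetric] A_def a0_def
    by (simp add: algebra_simps)
qed

end
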